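(* Write $z=(z_1,\ldots,z_n)\in\mathbb{C}^n$ and let constants $m\ge 2$, $R>0$, $A>0$, $B>0$, $k\in(0,1)$, and $K>0$ be given. Let \[ \widetilde\Omega_m=\Big\{z\in B(0,R) \;\Big|\; r(z)=\operatorname{Re} z_n - A|z_1|^m + B\Big(\sum_{j=2}^n|z_j|^m+|z_n||z|\Big)<0\Big\}. \] Then there exist positive constants $R_1$ and $C$ such that \[ F^K_{\widetilde\Omega_m}(z,X)\le C\frac{|X_n|}{d_{\widetilde\Omega_m}(z)^{1-\frac{1}{2m}}} \] for all $z\in B(0,R_1)\cap\Lambda(k)$ and all $X\in\mathbb{C}^n$ with $|X|\le K|X_n|$.
   Context: $B(z,R)$ denotes the Euclidean ball in $\mathbb{C}^n$ with center $z$ and radius $R$, and $|\cdot|$ the Euclidean norm. For $0<k<1$, $\Lambda(k)=\{z\in\mathbb{C}^n \mid -\operatorname{Re} z_n>k|z|\}$. $d_{\Omega}(z)$ denotes the Euclidean distance from $z$ to the boundary of $\Omega$. For a domain $\Omega\subset\mathbb{C}^n$, $z\in\Omega$ and $X\in\mathbb{C}^n$, the Kobayashi(–Royden) metric is $F^K_\Omega(z,X)=\inf\{1/\lambda \mid \exists f\colon D\to\Omega \text{ holomorphic},\ f(0)=z,\ f'(0)=\lambda X,\ \lambda>0\}$, where $D$ is the unit disc in $\mathbb{C}$. $X_n$ denotes the $n$-th component of $X$. *)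

theory Defs
  imports "HOL-Complex_Analysis.Complex_Analysis"
begin

text \<open>The coordinates z_1 and z_n are given by two
distinct indices i1, iN of the finite index type; the sum over j = 2..n is the sum over
all indices different from i1 (for the last index iN included).\<close>

definition Omega_m ::
  "nat \<Rightarrow> real \<Rightarrow> real \<Rightarrow> real \<Rightarrow> 'n::finite \<Rightarrow> 'n \<Rightarrow> (complex^'n) set" where
  "Omega_m m R A B i1 iN =
     {z \<in> ball 0 R. Re (z $ iN) - A * norm (z $ i1) ^ m
        + B * ((\<Sum>j\<in>UNIV - {i1}. norm (z $ j) ^ m) + norm (z $ iN) * norm z) < 0}"

definition Lambda_cone :: "real \<Rightarrow> 'n::finite \<Rightarrow> (complex^'n) set" where
  "Lambda_cone k iN = {z. - Re (z $ iN) > k * norm z}"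

definition dist_bd :: "(complex^'n::finite) set \<Rightarrow> complex^'n \<Rightarrow> real" where
  "dist_bd \<Omega> z = infdist z (frontier \<Omega>)"

text \<open>Kobayashi--Royden metric; a map D \<rightarrow> C^n is holomorphic iff all its components are.\<close>
definition kobayashi :: "(complex^'n::finite) set \<Rightarrow> complex^'n \<Rightarrow> complex^'n \<Rightarrow> real" where
  "kobayashi \<Omega> z X = Inf {1 / l | l. l > 0 \<and>
     (\<exists>f :: complex \<Rightarrow> complex^'n.
        (\<forall>i. (\<lambda>w. f w $ i) holomorphic_on ball 0 1) \<and>
        f ` ball 0 1 \<subseteq> \<Omega> \<and> f 0 = z \<and>
        (\<forall>i. deriv (\<lambda>w. f w $ i) 0 = complex_of_real l * X $ i))}"

end

theory Submission imports Defs begin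

lemma norm_scale_vec: "norm (\<chi> i. a * (x::complex^'n::finite) $ i) = cmod a * norm x"
proof -
  have "norm (\<chi> i. a * x $ i) = sqrt (\<Sum>i\<in>UNIV. (cmod a)\<^sup>2 * (cmod (x$i))\<^sup>2)"
    by (simp add: norm_vec_def L2_set_def norm_mult power_mult_distrib)
  also have "\<dots> = sqrt ((cmod a)\<^sup>2 * (\<Sum>i\<in>UNIV. (cmod (x$i))\<^sup>2))"
    by (simp add: sum_distrib_left)
  also have "\<dots> = cmod a * norm x"
    by (simp add: real_sqrt_mult norm_vec_def L2_set_def)
  finally show ?thesis .
qed

lemma norm_single_vec: "norm (\<chi> i. if i = j then q else (0::complex)) = cmod q"
proof -
  have "(\<Sum>i\<in>UNIV. (cmod (if i = j then q else 0))\<^sup>2) = (\<Sum>i\<in>UNIV. if i = j then (cmod q)\<^sup>2 else 0)"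
    by (rule sum.cong) auto
  then show ?thesis by (simp add: norm_vec_def L2_set_def)
qed

lemma disc_in:
  fixes z Y :: "complex^'n::finite" and i1 iN :: 'n and w :: complex
  assumes i: "i1 \<noteq> iN" and m: "m \<ge> 2" and A: "A > 0" and B: "B > 0" and k: "0 < k" "k < 1"
   and N: "N = real CARD('n)" and M: "M = 1 + 2/k"
   and t: "t = norm z" "0 < t" "t \<le> 1" "t \<le> \<delta>/3" "B*N*2^m*t \<le> k/4"
   and cone: "- Re (z$iN) > k*t"
   and d: "0<\<delta>" "\<delta><R" "2*B*\<delta> \<le> k/4" "B*M*\<delta> \<le> 1/4"
   and c: "0<c" "c \<le> \<delta>/3"
   and rho: "0<\<rho>" "\<rho> \<le> \<delta>/3" "\<rho> \<le> 1" "B*N*M^m*\<rho> \<le> 1/4" "4*M*\<rho>^2 \<le> c*k*t"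
      "2*\<rho>^(2*m) \<le> A*(c/2)^m*(k*t/2)^(2*m-1)"
   and Y: "norm Y \<le> \<rho>" and w: "cmod w < 1"
  shows "z + (\<chi> i. w * Y$i) + (\<chi> i. if i = i1 then of_real c*w^2 else 0) \<in> Omega_m m R A B i1 iN"
proof -
  define f where "f = z + (\<chi> i. w * Y$i) + (\<chi> i. if i = i1 then of_real c*w^2 else 0)"
  define r where "r = cmod w"
  have r0: "0 \<le> r" "r < 1" using w by (auto simp: r_def)
  have comp: "\<And>i. f$i = z$i + w*Y$i + (if i = i1 then of_real c*w^2 else 0)" by (simp add: f_def)
  have zi: "\<And>i. cmod (z$i) \<le> t" using Finite_Cartesian_Product.norm_nth_le t(1) by metis
  have Yi: "\<And>i. cmod (Y$i) \<le> \<rho>" using Finite_Cartesian_Product.norm_nth_le Y order_trans by metis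
  have wY: "\<And>i. cmod (w*Y$i) \<le> r*\<rho>"
    unfolding norm_mult r_def by (rule mult_mono) (use Yi in auto)
  have fj: "cmod (f$j) \<le> t + r*\<rho>" if "j \<noteq> i1" for j
  proof -
    have "cmod (f$j) = cmod (z$j + w*Y$j)" using that by (simp add: comp)
    also have "\<dots> \<le> cmod (z$j) + cmod (w*Y$j)" by (rule norm_triangle_ineq)
    finally show ?thesis using zi[of j] wY[of j] by linarith
  qed
  have nf: "norm f \<le> \<delta>"
  proof -
    have "norm f \<le> norm z + norm (\<chi> i. w * Y$i) + norm (\<chi> i. if i = i1 then of_real c*w^2 else (0::complex))"
      unfolding f_def by (rule order_trans[OF norm_triangle_ineq add_right_mono[OF norm_triangle_ineq]])
    also have "\<dots> = t + r * norm Y + c * r^2"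
      using c by (simp add: norm_scale_vec norm_single_vec t(1) r_def norm_mult norm_power)
    also have "\<dots> \<le> \<delta>/3 + 1 * \<rho> + c * 1"
    proof -
      have "r * norm Y \<le> 1 * \<rho>" using r0 Y by (intro mult_mono) auto
      moreover have "c * r^2 \<le> c * 1" using r0 c by (intro mult_left_mono) (auto simp: power_le_one)
      ultimately show ?thesis using t by linarith
    qed
    finally show ?thesis using rho c by linarith
  qed
  have reN: "Re (f$iN) \<le> Re (z$iN) + r*\<rho>"
  proof -
    have "Re (f$iN) = Re (z$iN) + Re (w*Y$iN)" using i by (simp add: comp)
    moreover have "Re (w*Y$iN) \<le> r*\<rho>" using wY[of iN] complex_Re_le_cmod order_trans by blast
    ultimately show ?thesis by linarith
  qed
  have fN: "cmod (f$iN) \<le> t + r*\<rho>" using fj i by auto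
  have f1: "cmod (f$i1) \<ge> c*r^2 - t - r*\<rho>"
  proof -
    have "cmod (of_real c * w^2) \<le> cmod (f$i1) + cmod (z$i1) + cmod (w*Y$i1)"
    proof -
      have "of_real c * w^2 = f$i1 - z$i1 - w*Y$i1" by (simp add: comp)
      moreover have "cmod (f$i1 - z$i1 - w*Y$i1) \<le> cmod (f$i1 - z$i1) + cmod (w*Y$i1)" by (rule norm_triangle_ineq4)
      moreover have "cmod (f$i1 - z$i1) \<le> cmod (f$i1) + cmod (z$i1)" by (rule norm_triangle_ineq4)
      ultimately show ?thesis by simp
    qed
    moreover have "cmod (of_real c * w^2) = c * r^2" using c by (simp add: norm_mult norm_power r_def)
    ultimately show ?thesis using zi[of i1] wY[of i1] by linarith
  qed
  define Sm where "Sm = (\<Sum>j\<in>UNIV - {i1}. cmod (f$j) ^ m)"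
  have cardle: "real (card (UNIV - {i1})) \<le> N"
    unfolding N by (simp add: card_mono)
  have Sm_le: "Sm \<le> N * b ^ m" if "\<And>j. j \<noteq> i1 \<Longrightarrow> cmod (f$j) \<le> b" for b
  proof -
    have b0: "0 \<le> b" using that[of iN] i norm_ge_zero order_trans by metis
    have "Sm \<le> real (card (UNIV - {i1})) * b^m"
      unfolding Sm_def by (rule sum_bounded_above) (use that in \<open>auto intro: power_mono\<close>)
    also have "\<dots> \<le> N * b^m" using cardle b0 by (intro mult_right_mono) auto
    finally show ?thesis .
  qed
  have N0: "N \<ge> 0" using N by simp
  have key: "Re (f$iN) - A * cmod (f$i1) ^ m + B * (Sm + cmod (f$iN) * norm f) < 0"
  proof (cases "r*\<rho> \<le> k*t/2")
    case True
    have b: "cmod (f$j) \<le> 2*t" if "j \<noteq> i1" for j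
    proof -
      have "k*t \<le> t" using k t by (simp add: mult_le_cancel_right1)
      thus ?thesis using fj[OF that] True t by linarith
    qed
    have "Sm \<le> N * (2*t)^m" by (rule Sm_le[OF b])
    also have "(2*t)^m = 2^m * t^m" by (simp add: power_mult_distrib)
    also have "t^m \<le> t^2" using t m by (intro power_decreasing) auto
    hence "N * (2^m * t^m) \<le> N * (2^m * t^2)" using N0 by (intro mult_left_mono) auto
    finally have "B * Sm \<le> (B*N*2^m*t) * t" using B by (simp add: power2_eq_square mult_ac)
    also have "\<dots> \<le> (k/4)*t" using t by (intro mult_right_mono) auto
    finally have S1: "B*Sm \<le> k*t/4" by simp
    have "cmod (f$iN) * norm f \<le> (2*t) * \<delta>" using b[of iN] i nf t by (intro mult_mono) auto
    hence "B * (cmod (f$iN) * norm f) \<le> B * ((2*t) * \<delta>)" using B by (intro mult_left_mono) auto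
    also have "\<dots> = (2*B*\<delta>) * t" by (simp add: mult_ac)
    also have "\<dots> \<le> (k/4)*t" using t d by (intro mult_right_mono) auto
    finally have S2: "B * (cmod (f$iN) * norm f) \<le> k*t/4" by simp
    have "A * cmod (f$i1) ^ m \<ge> 0" using A by simp
    then show ?thesis using S1 S2 reN True cone by (simp add: distrib_left)
  next
    case False
    hence v: "r*\<rho> > k*t/2" by simp
    have tM: "t + r*\<rho> \<le> M*(r*\<rho>)"
    proof -
      have "t \<le> (2/k)*(r*\<rho>)" using v k by (simp add: field_simps)
      thus ?thesis unfolding M by (simp add: distrib_right)
    qed
    have vle: "r*\<rho> \<le> \<rho>" using r0 rho by (simp add: mult_le_cancel_right1)
    have M0: "M \<ge> 0" using M k by simp
    have b: "cmod (f$j) \<le> M*(r*\<rho>)" if "j \<noteq> i1" for j using fj[OF that] tM by linarith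
    have "Sm \<le> N * (M*(r*\<rho>))^m" by (rule Sm_le[OF b])
    also have "(M*(r*\<rho>))^m = M^m * ((r*\<rho>) * (r*\<rho>)^(m-1))"
    proof -
      have e: "m = Suc (m-1)" using m by simp
      have "(r*\<rho>)^m = (r*\<rho>) * (r*\<rho>)^(m-1)" by (subst e) (simp only: power_Suc diff_Suc_1)
      thus ?thesis by (simp add: power_mult_distrib)
    qed
    also have "(r*\<rho>)^(m-1) \<le> \<rho>"
    proof -
      have "(r*\<rho>)^(m-1) \<le> (r*\<rho>)^1" using m vle rho r0 by (intro power_decreasing) (auto intro: order_trans[OF vle])
      thus ?thesis using vle by simp
    qed
    hence "N * (M^m * ((r*\<rho>) * (r*\<rho>)^(m-1))) \<le> N * (M^m * ((r*\<rho>) * \<rho>))"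
      using N0 M0 r0 rho by (intro mult_left_mono) auto
    finally have "B * Sm \<le> (B*N*M^m*\<rho>) * (r*\<rho>)" using B by (simp add: mult_ac)
    also have "\<dots> \<le> (1/4) * (r*\<rho>)" using rho r0 by (intro mult_right_mono) auto
    finally have S1: "B*Sm \<le> r*\<rho>/4" by simp
    have "cmod (f$iN) * norm f \<le> (M*(r*\<rho>)) * \<delta>" using b[of iN] i nf M0 r0 rho by (intro mult_mono) auto
    hence "B * (cmod (f$iN) * norm f) \<le> B * ((M*(r*\<rho>)) * \<delta>)" using B by (intro mult_left_mono) auto
    also have "\<dots> = (B*M*\<delta>) * (r*\<rho>)" by (simp add: mult_ac)
    also have "\<dots> \<le> (1/4)*(r*\<rho>)" using rho r0 d by (intro mult_right_mono) auto
    finally have S2: "B * (cmod (f$iN) * norm f) \<le> r*\<rho>/4" by simp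
    have "2*M*\<rho> < c*r"
    proof -
      have "c*(k*t) < c*(2*(r*\<rho>))" using v c by (intro mult_strict_left_mono) auto
      moreover have "c*k*t = c*(k*t)" by simp
      ultimately have "4*M*\<rho>^2 < c*(2*(r*\<rho>))" using rho(5) by linarith
      hence "(2*\<rho>) * (2*M*\<rho>) < (2*\<rho>) * (c*r)" by (simp add: power2_eq_square mult_ac)
      thus ?thesis using rho by simp
    qed
    hence "r*(2*M*\<rho>) \<le> r*(c*r)" using r0 by (intro mult_left_mono) auto
    hence "M*(r*\<rho>) \<le> c*r^2/2" by (simp add: power2_eq_square mult_ac)
    hence f1': "cmod (f$i1) \<ge> c*r^2/2" using f1 tM by linarith
    have kt0: "k*t > 0" using k t by simp
    have r0': "r > 0"
    proof (rule ccontr)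
      assume "\<not> r > 0" then have "r = 0" using r0 by simp
      thus False using v kt0 by simp
    qed
    have "A*(c/2)^m * r^(2*m-1) \<ge> 2*\<rho>"
    proof -
      have "(k*t/2)^(2*m-1) \<le> (r*\<rho>)^(2*m-1)" using v k t by (intro power_mono) auto
      hence "A*(c/2)^m*(k*t/2)^(2*m-1) \<le> A*(c/2)^m*(r*\<rho>)^(2*m-1)" using A c
        by (intro mult_left_mono) auto
      hence "2*\<rho>^(2*m) \<le> A*(c/2)^m*(r*\<rho>)^(2*m-1)" using rho(6) by linarith
      also have "\<dots> = (A*(c/2)^m * r^(2*m-1)) * \<rho>^(2*m-1)" by (simp add: power_mult_distrib)
      also have "2*\<rho>^(2*m) = (2*\<rho>) * \<rho>^(2*m-1)"
      proof -
        have "2*m = Suc (2*m-1)" using m by simp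
        hence "\<rho>^(2*m) = \<rho> * \<rho>^(2*m-1)" by (metis power_Suc)
        thus ?thesis by simp
      qed
      finally show ?thesis using rho by simp
    qed
    hence "A * (c*r^2/2)^m \<ge> 2*(r*\<rho>)"
    proof -
      assume h: "A*(c/2)^m * r^(2*m-1) \<ge> 2*\<rho>"
      have e: "2*m = Suc (2*m-1)" using m by simp
      have "(c*r^2/2)^m = (c/2)^m * r^(2*m)"
        by (simp add: power_mult_distrib power_mult[symmetric] power_divide mult_ac)
      also have "r^(2*m) = r^(2*m-1) * r" by (subst e) (simp add: mult.commute)
      finally have "A * (c*r^2/2)^m = (A*(c/2)^m * r^(2*m-1)) * r" by (simp add: mult_ac)
      moreover have "(2*\<rho>) * r \<le> (A*(c/2)^m * r^(2*m-1)) * r" using h r0 by (intro mult_right_mono) auto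
      moreover have "(2*\<rho>) * r = 2*(r*\<rho>)" by simp
      ultimately show ?thesis by linarith
    qed
    moreover have "A * (c*r^2/2)^m \<le> A * cmod (f$i1) ^ m" using f1' A c r0
      by (intro mult_left_mono power_mono) auto
    ultimately have "A * cmod (f$i1) ^ m \<ge> 2*(r*\<rho>)" by linarith
    moreover have "r*\<rho> \<ge> 0" using r0 rho by simp
    ultimately show ?thesis using S1 S2 reN cone kt0 by (simp add: distrib_left)
  qed
  have "f \<in> ball 0 R" using nf d by simp
  with key show ?thesis unfolding f_def[symmetric] Omega_m_def Sm_def by simp
qed

theorem proposition2p4:
  fixes i1 iN :: "'n::finite"
    and m :: nat and R A B k K :: real
  assumes "i1 \<noteq> iN"
    and "m \<ge> 2" and "R > 0" and "A > 0" and "B > 0"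
    and "0 < k" and "k < 1" and "K > 0"
  shows "\<exists>R1 > 0. \<exists>C > 0. \<forall>z \<in> ball 0 R1 \<inter> Lambda_cone k iN. \<forall>X :: complex^'n.
           norm X \<le> K * norm (X $ iN) \<longrightarrow>
           kobayashi (Omega_m m R A B i1 iN) z X
             \<le> C * norm (X $ iN) / dist_bd (Omega_m m R A B i1 iN) z powr (1 - 1 / (2 * real m))"
proof -
  note i = assms(1) and m = assms(2) and R = assms(3) and A = assms(4) and B = assms(5)
    and k = assms(6,7) and K = assms(8)
  define \<Omega> where "\<Omega> = Omega_m m R A B i1 iN"
  define N where "N = real CARD('n)"
  define M where "M = 1 + 2/k"
  define \<delta> where "\<delta> = min (R/2) (min (k/(8*B)) (1/(4*B*M)))"
  define c where "c = \<delta>/3"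
  define Q where "Q = A*(c/2)^m*(k/2)^(2*m-1)/2"
  define \<beta> where "\<beta> = min 1 (min (c*k/(4*M)) (min Q (min (1/(4*B*N*M^m)) (\<delta>/3))))"
  define R1 where "R1 = min 1 (min (\<delta>/3) (k/(4*B*N*2^m)))"
  define \<alpha> where "\<alpha> = 1 - 1 / (2 * real m)"
  have N0: "N > 0" unfolding N_def by simp
  have M0: "M > 0" unfolding M_def using k by (simp add: add_pos_pos)
  have d0: "\<delta> > 0" unfolding \<delta>_def using R B k M0 by simp
  have dR: "\<delta> < R" unfolding \<delta>_def using R by linarith
  have d1: "2*B*\<delta> \<le> k/4"
  proof -
    have "\<delta> \<le> k/(8*B)" unfolding \<delta>_def by linarith
    thus ?thesis using B by (simp add: field_simps)
  qed
  have d2: "B*M*\<delta> \<le> 1/4"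
  proof -
    have "\<delta> \<le> 1/(4*B*M)" unfolding \<delta>_def by linarith
    thus ?thesis using B M0 by (simp add: field_simps)
  qed
  have c0: "c > 0" "c \<le> \<delta>/3" unfolding c_def using d0 by auto
  have Q0: "Q > 0" unfolding Q_def using A c0 k by simp
  have b0: "\<beta> > 0" unfolding \<beta>_def using c0 k M0 Q0 B N0 d0 by simp
  have b1: "\<beta> \<le> 1" "\<beta> \<le> c*k/(4*M)" "\<beta> \<le> Q" "\<beta> \<le> 1/(4*B*N*M^m)" "\<beta> \<le> \<delta>/3"
    unfolding \<beta>_def by linarith+
  have R10: "R1 > 0" unfolding R1_def using d0 k B N0 by simp
  have R11: "R1 \<le> 1" "R1 \<le> \<delta>/3" "R1 \<le> k/(4*B*N*2^m)" unfolding R1_def by linarith+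
  have al: "0 \<le> \<alpha>" "\<alpha> \<le> 1" "1 \<le> 2*\<alpha>" "\<alpha> * real (2*m) = real (2*m-1)"
    using m by (auto simp: \<alpha>_def field_simps of_nat_diff)
  have disc: "z + (\<chi> i. w * Y$i) + (\<chi> i. if i = i1 then of_real c*w^2 else 0) \<in> \<Omega>"
    if z: "z \<in> ball 0 R1 \<inter> Lambda_cone k iN" and Y: "norm Y \<le> \<beta> * norm z powr \<alpha>"
      and w: "cmod w < 1" for z Y w
  proof -
    define t where "t = norm z"
    define \<rho> where "\<rho> = \<beta> * t powr \<alpha>"
    have cone: "- Re (z$iN) > k*t" using z by (simp add: Lambda_cone_def t_def)
    have t0: "t > 0"
    proof -
      have "k*t \<ge> 0" using k by (simp add: t_def)
      hence "z$iN \<noteq> 0" using cone by auto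
      hence "z \<noteq> 0" by auto
      thus ?thesis by (simp add: t_def)
    qed
    have tR: "t < R1" using z by (simp add: t_def)
    have t1: "t \<le> 1" "t \<le> \<delta>/3" using tR R11 by linarith+
    have t2: "B*N*2^m*t \<le> k/4"
    proof -
      have "t \<le> k/(4*B*N*2^m)" using tR R11 by linarith
      thus ?thesis using B N0 by (simp add: field_simps)
    qed
    have tp0: "t powr \<alpha> > 0" using t0 by simp
    have tp1: "t powr \<alpha> \<le> 1" using t0 t1 al by (intro powr_le1) auto
    have r0: "\<rho> > 0" unfolding \<rho>_def using b0 tp0 by simp
    have rb: "\<rho> \<le> \<beta>" unfolding \<rho>_def using b0 tp1 by (simp add: mult_left_le)
    have r1: "\<rho> \<le> \<delta>/3" "\<rho> \<le> 1" using rb b1 by linarith+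
    have r2: "B*N*M^m*\<rho> \<le> 1/4"
    proof -
      have "\<rho> \<le> 1/(4*B*N*M^m)" using rb b1 by linarith
      thus ?thesis using B N0 M0 by (simp add: field_simps)
    qed
    have r3: "4*M*\<rho>^2 \<le> c*k*t"
    proof -
      have "\<rho>^2 = \<beta>^2 * t powr (2*\<alpha>)"
        unfolding \<rho>_def using t0 by (simp add: power_mult_distrib powr_realpow[symmetric] powr_powr mult.commute)
      also have "t powr (2*\<alpha>) \<le> t powr 1" using al t0 t1 by (intro powr_mono') auto
      hence "\<beta>^2 * t powr (2*\<alpha>) \<le> \<beta>^2 * t" using t0 by (intro mult_left_mono) auto
      also have "\<beta>^2 \<le> \<beta>" using b0 b1 by (simp add: power2_eq_square mult_left_le)
      hence "\<beta>^2 * t \<le> (c*k/(4*M)) * t" using b1 t0 by (intro mult_right_mono) auto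
      finally show ?thesis using M0 by (simp add: field_simps)
    qed
    have r4: "2*\<rho>^(2*m) \<le> A*(c/2)^m*(k*t/2)^(2*m-1)"
    proof -
      have "(t powr \<alpha>)^(2*m) = t^(2*m-1)"
        using t0 al(4) by (simp add: powr_realpow[symmetric] powr_powr)
      hence "\<rho>^(2*m) = \<beta>^(2*m) * t^(2*m-1)" unfolding \<rho>_def by (simp add: power_mult_distrib)
      also have "\<beta>^(2*m) \<le> \<beta>^1" using b0 b1 m by (intro power_decreasing) auto
      hence "\<beta>^(2*m) * t^(2*m-1) \<le> Q * t^(2*m-1)" using b1 t0 by (intro mult_right_mono) auto
      finally have "2*\<rho>^(2*m) \<le> 2*Q*t^(2*m-1)" by simp
      also have "2*Q*t^(2*m-1) = A*(c/2)^m*(k*t/2)^(2*m-1)"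
        unfolding Q_def by (simp add: power_mult_distrib power_divide)
      finally show ?thesis .
    qed
    show ?thesis unfolding \<Omega>_def
      by (rule disc_in[OF i m A B k N_def M_def t_def t0 t1 t2 cone d0 dR d1 d2 c0 r0 r1 r2 r3 r4 _ w])
        (use Y in \<open>simp add: t_def \<rho>_def\<close>)
  qed
  have Oopen: "open \<Omega>"
  proof -
    have "\<Omega> = ball 0 R \<inter> {z. Re (z $ iN) - A * norm (z $ i1) ^ m
        + B * ((\<Sum>j\<in>UNIV - {i1}. norm (z $ j) ^ m) + norm (z $ iN) * norm z) < 0}"
      unfolding \<Omega>_def Omega_m_def by auto
    also have "open \<dots>"
      by (intro open_Int open_ball open_Collect_less continuous_intros)
    finally show ?thesis .
  qed
  have zero_notin: "0 \<notin> \<Omega>" unfolding \<Omega>_def Omega_m_def using m by (simp add: zero_power)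
  have inO: "z \<in> \<Omega>" if "z \<in> ball 0 R1 \<inter> Lambda_cone k iN" for z
  proof -
    have "norm (0::complex^'n) \<le> \<beta> * norm z powr \<alpha>" using b0 by simp
    moreover have "(\<chi> i. (0::complex)) = (0::complex^'n)" by (simp add: vec_eq_iff)
    moreover have "(\<chi> i. if i = i1 then complex_of_real c * 0\<^sup>2 else 0) = (0::complex^'n)" by (simp add: vec_eq_iff)
    ultimately show ?thesis using disc[OF that, of 0 0] by simp
  qed
  have main: "kobayashi \<Omega> z X \<le> (K/\<beta>) * norm (X$iN) / dist_bd \<Omega> z powr \<alpha>"
    if z: "z \<in> ball 0 R1 \<inter> Lambda_cone k iN" and X: "norm X \<le> K * norm (X$iN)" for z X
  proof -
    define t where "t = norm z"
    have cone: "- Re (z$iN) > k*t" using z by (simp add: Lambda_cone_def t_def)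
    have t0: "t > 0"
    proof -
      have "k*t \<ge> 0" using k by (simp add: t_def)
      hence "z$iN \<noteq> 0" using cone by auto
      hence "z \<noteq> 0" by auto
      thus ?thesis by (simp add: t_def)
    qed
    have tR: "t < R1" using z by (simp add: t_def)
    have tp0: "t powr \<alpha> > 0" using t0 by simp
    have memS: "kobayashi \<Omega> z X \<le> 1/l" if l: "l > 0" "norm (\<chi> i. of_real l * X$i) \<le> \<beta> * t powr \<alpha>" for l
    proof -
      define Y where "Y = (\<chi> i. of_real l * X$i)"
      define f where "f = (\<lambda>w. z + (\<chi> i. w * Y$i) + (\<chi> i. if i = i1 then of_real c*w^2 else 0))"
      have comp: "(\<lambda>w. f w $ i) = (\<lambda>w. z$i + w*(of_real l * X$i) + (if i = i1 then of_real c*w^2 else 0))" for i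
        by (simp add: f_def Y_def)
      have hol: "\<forall>i. (\<lambda>w. f w $ i) holomorphic_on ball 0 1"
      proof
        fix i show "(\<lambda>w. f w $ i) holomorphic_on ball 0 1"
          unfolding comp by (cases "i = i1") (auto intro!: holomorphic_intros)
      qed
      have img: "f ` ball 0 1 \<subseteq> \<Omega>"
      proof
        fix y assume "y \<in> f ` ball 0 1"
        then obtain w where w: "w \<in> ball 0 1" "y = f w" by auto
        have "norm Y \<le> \<beta> * norm z powr \<alpha>" using l by (simp add: Y_def t_def)
        from disc[OF z this, of w] w show "y \<in> \<Omega>" by (simp add: f_def)
      qed
      have f0: "f 0 = z" by (simp add: f_def vec_eq_iff)
      have der: "\<forall>i. deriv (\<lambda>w. f w $ i) 0 = complex_of_real l * X $ i"
      proof
        fix i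
        have "((\<lambda>w. z$i + w*(of_real l * X$i) + (if i = i1 then of_real c*w^2 else 0))
            has_field_derivative (of_real l * X$i)) (at 0)"
          by (cases "i = i1") (auto intro!: derivative_eq_intros)
        thus "deriv (\<lambda>w. f w $ i) 0 = complex_of_real l * X $ i"
          unfolding comp by (rule DERIV_imp_deriv)
      qed
      have "1/l \<in> {1 / l | l. l > 0 \<and>
         (\<exists>f :: complex \<Rightarrow> complex^'n.
            (\<forall>i. (\<lambda>w. f w $ i) holomorphic_on ball 0 1) \<and>
            f ` ball 0 1 \<subseteq> \<Omega> \<and> f 0 = z \<and>
            (\<forall>i. deriv (\<lambda>w. f w $ i) 0 = complex_of_real l * X $ i))}"
        using hol img f0 der l(1) by blast
      then show ?thesis unfolding kobayashi_def
        by (rule cInf_lower) (rule bdd_belowI[where m=0], auto)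
    qed
    have front0: "0 \<in> frontier \<Omega>"
    proof -
      have "0 \<in> closure \<Omega>"
        unfolding closure_approachable
      proof (intro allI impI)
        fix e :: real assume e: "e > 0"
        define s where "s = min 1 (e/(2*t))"
        have s: "0 < s" "s \<le> 1" "s \<le> e/(2*t)" using e t0 by (auto simp: s_def)
        have ny: "norm (s *\<^sub>R z) = s * t" using s by (simp add: t_def)
        have "s *\<^sub>R z \<in> ball 0 R1 \<inter> Lambda_cone k iN"
        proof
          show "s *\<^sub>R z \<in> ball 0 R1" using ny s tR t0
            by simp (smt (verit) mult_left_le_one_le)
          have "- Re ((s *\<^sub>R z)$iN) = s * (- Re (z$iN))" by simp
          also have "\<dots> > s * (k*t)" using mult_strict_left_mono[OF cone s(1)] by simp
          finally show "s *\<^sub>R z \<in> Lambda_cone k iN" unfolding Lambda_cone_def using ny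
            by (simp add: mult_ac)
        qed
        hence "s *\<^sub>R z \<in> \<Omega>" by (rule inO)
        moreover have "dist (s *\<^sub>R z) 0 < e"
        proof -
          have "s * t \<le> (e/(2*t)) * t" using s t0 by (intro mult_right_mono) auto
          also have "\<dots> = e/2" using t0 by simp
          finally show ?thesis using ny e by simp
        qed
        ultimately show "\<exists>y\<in>\<Omega>. dist y 0 < e" by blast
      qed
      moreover have "0 \<notin> interior \<Omega>" using zero_notin interior_subset by blast
      ultimately show ?thesis by (simp add: frontier_def)
    qed
    have dle: "dist_bd \<Omega> z \<le> t" unfolding dist_bd_def t_def using infdist_le[OF front0, of z] by simp
    have dpos: "dist_bd \<Omega> z > 0"
    proof -
      have "z \<notin> frontier \<Omega>" using inO[OF z] Oopen by (simp add: frontier_def interior_open)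
      hence "infdist z (frontier \<Omega>) \<noteq> 0"
        using in_closed_iff_infdist_zero[OF frontier_closed, of \<Omega> z] front0 by auto
      thus ?thesis unfolding dist_bd_def using infdist_nonneg[of z "frontier \<Omega>"] by linarith
    qed
    have pw: "dist_bd \<Omega> z powr \<alpha> \<le> t powr \<alpha>" using al dpos dle by (intro powr_mono2) auto
    have pw0: "dist_bd \<Omega> z powr \<alpha> > 0" using dpos by simp
    have rhs: "K*norm (X$iN)/(\<beta> * t powr \<alpha>) \<le> (K/\<beta>)*norm (X$iN)/dist_bd \<Omega> z powr \<alpha>"
    proof -
      have "K*norm (X$iN)/(\<beta> * t powr \<alpha>) \<le> K*norm (X$iN)/(\<beta> * dist_bd \<Omega> z powr \<alpha>)"
        using pw pw0 b0 K tp0 by (intro divide_left_mono mult_left_mono) auto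
      thus ?thesis by simp
    qed
    show ?thesis
    proof (cases "X = 0")
      case True
      have "kobayashi \<Omega> z X \<le> 0"
      proof (rule ccontr)
        assume h: "\<not> kobayashi \<Omega> z X \<le> 0"
        have h0: "(\<chi> i. complex_of_real (2/kobayashi \<Omega> z X) * X$i) = 0" using True by (simp add: vec_eq_iff)
        have "norm (0::complex^'n) \<le> \<beta> * t powr \<alpha>" using b0 tp0 by simp
        hence "kobayashi \<Omega> z X \<le> 1/(2/kobayashi \<Omega> z X)"
          using h by (intro memS) (auto simp only: h0 not_le divide_pos_pos zero_less_numeral)
        thus False using h by simp
      qed
      thus ?thesis using True by simp
    next
      case False
      hence nX: "norm X > 0" by simp
      define l where "l = \<beta> * t powr \<alpha> / norm X"
      have l0: "l > 0" using b0 tp0 nX by (simp add: l_def)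
      have "norm (\<chi> i. of_real l * X$i) = \<beta> * t powr \<alpha>"
      proof -
        have "norm (\<chi> i. of_real l * X$i) = l * norm X" using norm_scale_vec[of "of_real l" X] l0 by simp
        also have "\<dots> = \<beta> * t powr \<alpha>" using nX by (simp add: l_def)
        finally show ?thesis .
      qed
      hence "kobayashi \<Omega> z X \<le> 1/l" using l0 by (intro memS) auto
      also have "1/l = norm X / (\<beta> * t powr \<alpha>)" by (simp add: l_def)
      also have "\<dots> \<le> K*norm (X$iN)/(\<beta> * t powr \<alpha>)" using X b0 tp0 by (intro divide_right_mono) auto
      also note rhs
      finally show ?thesis .
    qed
  qed
  have "K/\<beta> > 0" using K b0 by simp
  with R10 main show ?thesis unfolding \<Omega>_def \<alpha>_def by blast
qed

end
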